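(* Let $F$ be a continuous distribution function on $\mathbb{R}$, and let $G:=F\ast F$ be the distribution function of $S+T$ where $S,T$ are i.i.d. with distribution function $F$. For $(v,t)\in(0,1)^2$ define $k_v(t):=F\big(G^{-1}(v)-F^{-1}(t)\big)$, and set $C(v,u):=\int_0^uk_v(t)\,dt$ for $v\in(0,1)$, $u\in[0,1]$, with $C(0,u)=0$, $C(1,u)=u$. Then $C$ is an SI copula satisfying $\mathcal{T}(C)=C$.
   Context: For a distribution function $H$ on $\mathbb{R}$, $H^{-1}(w):=\inf\{x: H(x)\ge w\}$. A bivariate copula $C$ is SI if $C(v,\cdot)$ is concave for all $v\in[0,1]$. $\Pi(u,v)=uv$; $\partial_2$ the partial derivative in the second argument; $D\vee E(u,v):=\int_0^1\min\{\partial_2D(u,t),\partial_2E(v,t)\}\,dt$; $\mathcal{T}(C):=C\vee\Pi$. *)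

theory Defs
  imports "HOL-Probability.Probability"
begin

definition quantile :: "(real \<Rightarrow> real) \<Rightarrow> real \<Rightarrow> real" where
  "quantile H w = Inf {x. w \<le> H x}"

definition copula :: "(real \<Rightarrow> real \<Rightarrow> real) \<Rightarrow> bool" where
  "copula C \<longleftrightarrow>
     (\<forall>u\<in>{0..1}. C u 0 = 0 \<and> C 0 u = 0 \<and> C u 1 = u \<and> C 1 u = u) \<and>
     (\<forall>u1 u2 v1 v2. 0 \<le> u1 \<and> u1 \<le> u2 \<and> u2 \<le> 1 \<and> 0 \<le> v1 \<and> v1 \<le> v2 \<and> v2 \<le> 1 \<longrightarrow>
        C u2 v2 - C u2 v1 - C u1 v2 + C u1 v1 \<ge> 0)"

definition SI_copula :: "(real \<Rightarrow> real \<Rightarrow> real) \<Rightarrow> bool" where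
  "SI_copula C \<longleftrightarrow> copula C \<and> (\<forall>v\<in>{0..1}. concave_on {0..1} (C v))"

definition indep_copula :: "real \<Rightarrow> real \<Rightarrow> real" where
  "indep_copula u v = u * v"

text \<open>Partial derivative in the second argument (where it exists; elsewhere an
  unspecified value, which is irrelevant for integration since the set of such points is null).\<close>
definition partial2 :: "(real \<Rightarrow> real \<Rightarrow> real) \<Rightarrow> real \<Rightarrow> real \<Rightarrow> real" where
  "partial2 D u t = deriv (\<lambda>s. D u s) t"

definition copula_join :: "(real \<Rightarrow> real \<Rightarrow> real) \<Rightarrow> (real \<Rightarrow> real \<Rightarrow> real) \<Rightarrow> real \<Rightarrow> real \<Rightarrow> real" where
  "copula_join D E u v = integral {0..1} (\<lambda>t. min (partial2 D u t) (partial2 E v t))"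

definition T_op :: "(real \<Rightarrow> real \<Rightarrow> real) \<Rightarrow> real \<Rightarrow> real \<Rightarrow> real" where
  "T_op C = copula_join C indep_copula"

end

theory Submission
  imports Defs
begin


lemma qgal:
  assumes "real_distribution M" "0 < t" "t < 1"
  shows "t \<le> cdf M x \<longleftrightarrow> quantile (cdf M) t \<le> x"
proof -
  interpret cdf_distribution M using assms(1) by (simp add: cdf_distribution_def)
  show ?thesis using pseudoinverse[of t x] assms unfolding quantile_def by simp
qed

lemma qmono:
  assumes "real_distribution M" "0 < s" "s \<le> t" "t < 1"
  shows "quantile (cdf M) s \<le> quantile (cdf M) t"
proof -
  interpret cdf_distribution M using assms(1) by (simp add: cdf_distribution_def)
  show ?thesis using mono_I assms unfolding quantile_def mono_on_def by auto
qed

lemma qcdf: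
  assumes "real_distribution M" "continuous_on UNIV (cdf M)" "0 < t" "t < 1"
  shows "cdf M (quantile (cdf M) t) = t"
proof (rule antisym)
  let ?q = "quantile (cdf M) t"
  show "t \<le> cdf M ?q" using qgal[OF assms(1,3,4)] by simp
  show "cdf M ?q \<le> t"
  proof (rule ccontr)
    assume "\<not> cdf M ?q \<le> t"
    hence "t < cdf M ?q" by simp
    moreover have "isCont (cdf M) ?q" using assms(2) by (simp add: continuous_on_eq_continuous_at)
    hence "(cdf M \<longlongrightarrow> cdf M ?q) (at_left ?q)"
      by (simp add: filterlim_at_split isCont_def)
    ultimately have "eventually (\<lambda>x. t < cdf M x) (at_left ?q)"
      by (simp add: order_tendstoD(1))
    then obtain b where "b < ?q" "\<And>y. b < y \<Longrightarrow> y < ?q \<Longrightarrow> t < cdf M y"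
      by (auto simp: eventually_at_left_field)
    hence "t < cdf M ((b + ?q)/2)" by simp
    thus False using qgal[OF assms(1,3,4), of "(b + ?q)/2"] \<open>b < ?q\<close> by simp
  qed
qed

lemma transfer:
  fixes h :: "real \<Rightarrow> real"
  assumes "real_distribution M" and hm[measurable]: "h \<in> borel_measurable borel" and hb: "\<And>x. \<bar>h x\<bar> \<le> B"
  shows "((\<lambda>t. h (quantile (cdf M) t)) has_integral (\<integral>x. h x \<partial>M)) {0..1}"
proof -
  interpret cdf_distribution M using assms(1) by (simp add: cdf_distribution_def)
  let ?\<Omega> = "restrict_space lborel {0<..<1::real}"
  let ?Q = "quantile (cdf M)"
  have Qe: "?Q = I" by (simp add: quantile_def fun_eq_iff)
  interpret \<Omega>: prob_space ?\<Omega>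
    by (auto simp add: emeasure_restrict_space space_restrict_space intro!: prob_spaceI)
  have Qm: "?Q \<in> measurable ?\<Omega> borel" unfolding Qe
    
  proof -
    have "sets ?\<Omega> = sets (restrict_space borel {0<..<1::real})"
      by (rule sets_restrict_space_cong) simp
    hence "measurable ?\<Omega> borel = measurable (restrict_space borel {0<..<1::real}) borel"
      by (rule measurable_cong_sets) simp
    thus "I \<in> measurable ?\<Omega> borel" using measurable_CI by simp
  qed
  have "(\<integral>x. h x \<partial>M) = (\<integral>x. h x \<partial>distr ?\<Omega> borel I)" using distr_I_eq_M by simp
  also have "\<dots> = (\<integral>t. h (?Q t) \<partial>?\<Omega>)" unfolding Qe by (rule integral_distr[of I _ borel h]) (use Qm Qe in auto)
  also have "\<dots> = (\<integral>t. indicator {0<..<1} t *\<^sub>R h (?Q t) \<partial>lborel)"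
    by (rule integral_restrict_space) auto
  finally have eq: "(\<integral>x. h x \<partial>M) = (\<integral>t. indicator {0<..<1} t *\<^sub>R h (?Q t) \<partial>lborel)" .
  have hQm: "(\<lambda>t. h (?Q t)) \<in> borel_measurable ?\<Omega>" using Qm by measurable
  have "integrable ?\<Omega> (\<lambda>t. h (?Q t))"
    by (rule \<Omega>.integrable_const_bound[where B=B]) (use hb hQm in auto)
  hence int: "integrable lborel (\<lambda>t. indicator {0<..<1} t *\<^sub>R h (?Q t))"
    by (subst (asm) integrable_restrict_space) auto
  have "((\<lambda>t. indicator {0<..<1} t *\<^sub>R h (?Q t)) has_integral (\<integral>x. h x \<partial>M)) UNIV"
    unfolding eq by (rule has_integral_integral_lborel[OF int])
  hence "((\<lambda>t. if t \<in> {0<..<1} then h (?Q t) else 0) has_integral (\<integral>x. h x \<partial>M)) UNIV"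
    by (rule has_integral_eq[rotated]) (auto simp: indicator_def)
  hence "((\<lambda>t. h (?Q t)) has_integral (\<integral>x. h x \<partial>M)) {0<..<1}"
    by (subst (asm) has_integral_restrict_UNIV)
  moreover have "negligible {x \<in> {0<..<1} - {0..1::real}. h (?Q x) \<noteq> 0}"
    by (rule negligible_subset[of "{}"]) auto
  moreover have "negligible {x \<in> {0..1} - {0<..<1::real}. h (?Q x) \<noteq> 0}"
    by (rule negligible_subset[of "{0,1}"]) auto
  ultimately show ?thesis
    using has_integral_spike_set_eq[of "{0<..<1}" "{0..1}" "\<lambda>x. h (?Q x)"] by blast
qed



lemma conv_rd:
  assumes "real_distribution M"
  shows "real_distribution (M \<star> M)"
proof -
  interpret real_distribution M by fact
  interpret P: prob_space "M \<Otimes>\<^sub>M M" by (rule prob_space_pair) unfold_locales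
  have "(\<lambda>(x, y). x + y::real) \<in> measurable (M \<Otimes>\<^sub>M M) borel"
    by (simp add: measurable_cong_sets[OF sets_pair_measure_cong[OF events_eq_borel events_eq_borel] refl])
  hence "prob_space (distr (M \<Otimes>\<^sub>M M) borel (\<lambda>(x, y). x + y))"
    by (rule P.prob_space_distr)
  thus ?thesis unfolding real_distribution_def convolution_def real_distribution_axioms_def
    by simp
qed

lemma conv_emeasure:
  assumes "real_distribution M" "A \<in> sets borel"
  shows "emeasure (M \<star> M) A = (\<integral>\<^sup>+y. emeasure M {a. a + y \<in> A} \<partial>M)"
proof -
  interpret real_distribution M by fact
  show ?thesis
    by (rule convolution_emeasure) (auto simp: assms finite_measure_axioms)
qed

lemma conv_cdf:
  assumes "real_distribution M"
  shows "cdf (M \<star> M) x = (\<integral>y. cdf M (x - y) \<partial>M)"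
proof -
  interpret real_distribution M by fact
  interpret N: real_distribution "M \<star> M" by (rule conv_rd) fact
  have "emeasure (M \<star> M) {..x} = (\<integral>\<^sup>+y. emeasure M {a. a + y \<in> {..x}} \<partial>M)"
    by (rule conv_emeasure) (auto simp: assms)
  also have "\<dots> = (\<integral>\<^sup>+y. ennreal (cdf M (x - y)) \<partial>M)"
  proof (rule nn_integral_cong)
    fix y
    have "{a. a + y \<in> {..x}} = {..x - y}" by auto
    thus "emeasure M {a. a + y \<in> {..x}} = ennreal (cdf M (x - y))"
      by (simp add: cdf_def emeasure_eq_measure)
  qed
  also have "\<dots> = ennreal (\<integral>y. cdf M (x - y) \<partial>M)"
  proof (rule nn_integral_eq_integral)
    have m: "cdf M \<in> borel_measurable borel"
      by (intro borel_measurable_mono) (simp add: cdf_nondecreasing monoI)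
    show "integrable M (\<lambda>y. cdf M (x - y))"
      by (rule integrable_const_bound[where B=1]) (use m cdf_nonneg cdf_bounded_prob in auto)
  qed (simp add: cdf_nonneg)
  finally have "emeasure (M \<star> M) {..x} = ennreal (\<integral>y. cdf M (x - y) \<partial>M)" .
  moreover have "0 \<le> (\<integral>y. cdf M (x - y) \<partial>M)" by (simp add: cdf_nonneg)
  ultimately show ?thesis
    by (simp add: cdf_def N.emeasure_eq_measure)
qed

lemma conv_cont:
  assumes "real_distribution M" "continuous_on UNIV (cdf M)"
  shows "continuous_on UNIV (cdf (M \<star> M))"
proof -
  interpret real_distribution M by fact
  interpret N: real_distribution "M \<star> M" by (rule conv_rd) fact
  have at: "measure M {z} = 0" for z
    using assms(2) isCont_cdf by (simp add: continuous_on_eq_continuous_at)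
  { fix x
    have "emeasure (M \<star> M) {x} = (\<integral>\<^sup>+y. emeasure M {a. a + y \<in> {x}} \<partial>M)"
      by (rule conv_emeasure) (auto simp: assms)
    also have "\<dots> = (\<integral>\<^sup>+y. 0 \<partial>M)"
    proof (rule nn_integral_cong)
      fix y
      have "{a. a + y \<in> {x}} = {x - y}" by auto
      thus "emeasure M {a. a + y \<in> {x}} = 0" using at[of "x - y"]
        by (simp add: emeasure_eq_measure)
    qed
    finally have "measure (M \<star> M) {x} = 0" by (simp add: N.emeasure_eq_measure)
    hence "isCont (cdf (M \<star> M)) x" by (simp add: N.isCont_cdf) }
  thus ?thesis by (simp add: continuous_on_eq_continuous_at)
qed



lemma measure_le_min:
  assumes "real_distribution M" "continuous_on UNIV (cdf M)" "0 \<le> v" "v \<le> 1"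
  shows "measure M {z. z \<le> c \<and> cdf M z \<le> v} = min (cdf M c) v"
proof -
  interpret cdf_distribution M using assms(1) by (simp add: cdf_distribution_def)
  let ?\<Omega> = "restrict_space lborel {0<..<1::real}"
  have Im: "I \<in> measurable ?\<Omega> borel"
  proof -
    have "sets ?\<Omega> = sets (restrict_space borel {0<..<1::real})"
      by (rule sets_restrict_space_cong) simp
    hence "measurable ?\<Omega> borel = measurable (restrict_space borel {0<..<1::real}) borel"
      by (rule measurable_cong_sets) simp
    thus "I \<in> measurable ?\<Omega> borel" using measurable_CI by simp
  qed
  have Cm: "C \<in> borel_measurable borel" by (rule measurable_C)
  have A: "{z. z \<le> c \<and> C z \<le> v} \<in> sets borel" using Cm by measurable
  let ?m = "min (C c) v"
  have m01: "0 \<le> ?m" "?m \<le> 1" using cdf_nonneg[of c] assms(3,4) by auto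
  have "measure M {z. z \<le> c \<and> C z \<le> v} = measure (distr ?\<Omega> borel I) {z. z \<le> c \<and> C z \<le> v}"
    using distr_I_eq_M by simp
  also have "\<dots> = measure ?\<Omega> (I -` {z. z \<le> c \<and> C z \<le> v} \<inter> space ?\<Omega>)"
    by (rule measure_distr[OF Im A])
  also have "I -` {z. z \<le> c \<and> C z \<le> v} \<inter> space ?\<Omega> = {0<..<1} \<inter> {..?m}"
  proof (rule set_eqI)
    fix t :: real
    show "t \<in> I -` {z. z \<le> c \<and> C z \<le> v} \<inter> space ?\<Omega> \<longleftrightarrow> t \<in> {0<..<1} \<inter> {..?m}"
    proof (cases "0 < t \<and> t < 1")
      case True
      hence t: "0 < t" "t < 1" by auto
      have "C (I t) = t" using qcdf[OF assms(1,2) t] unfolding quantile_def .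
      hence "(I t \<le> c \<and> C (I t) \<le> v) \<longleftrightarrow> t \<le> ?m"
        using pseudoinverse[OF t, of c] by auto
      thus ?thesis using t by (simp add: space_restrict_space)
    next
      case False thus ?thesis by (auto simp: space_restrict_space)
    qed
  qed
  also have "measure ?\<Omega> ({0<..<1} \<inter> {..?m}) = measure lborel ({0<..<1} \<inter> {..?m})"
    by (subst measure_restrict_space) auto
  also have "\<dots> = ?m"
  proof (cases "?m < 1")
    case True
    hence "{0<..<1} \<inter> {..?m} = {0<..?m}" by auto
    thus ?thesis using m01 by simp
  next
    case False
    hence "{0<..<1} \<inter> {..?m} = {0<..<1}" using m01 by auto
    thus ?thesis using m01 False by simp
  qed
  finally show ?thesis .
qed

lemma sym_ident:
  assumes rd: "real_distribution M" and cont: "continuous_on UNIV (cdf M)" and v: "0 \<le> v" "v \<le> 1"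
  shows "(\<integral>y. min (cdf M (g - y)) v \<partial>M) = (\<integral>y. indicator {y. cdf M y \<le> v} y * cdf M (g - y) \<partial>M)"
proof -
  interpret real_distribution M by fact
  interpret pair_sigma_finite M M by unfold_locales
  let ?F = "cdf M"
  have Fm[measurable]: "?F \<in> borel_measurable borel"
    by (intro borel_measurable_mono) (simp add: cdf_nondecreasing monoI)
  let ?S = "{p::real\<times>real. fst p + snd p \<le> g \<and> ?F (snd p) \<le> v}"
  have "?S = {p \<in> space (borel \<Otimes>\<^sub>M borel). fst p + snd p \<le> g \<and> ?F (snd p) \<le> v}"
    by (simp add: space_pair_measure)
  also have "\<dots> \<in> sets (borel \<Otimes>\<^sub>M borel)"
  proof -
    have m1: "(\<lambda>p::real\<times>real. fst p + snd p) \<in> borel_measurable (borel \<Otimes>\<^sub>M borel)"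
      by (rule borel_measurable_add[OF measurable_fst measurable_snd])
    have m2: "(\<lambda>p::real\<times>real. ?F (snd p)) \<in> borel_measurable (borel \<Otimes>\<^sub>M borel)"
      by (rule measurable_compose[OF measurable_snd Fm])
    have "{p \<in> space (borel \<Otimes>\<^sub>M borel). fst p + snd p \<le> g \<and> ?F (snd p) \<le> v}
      = {p \<in> space (borel \<Otimes>\<^sub>M borel). fst p + snd p \<le> g} \<inter> {p \<in> space (borel \<Otimes>\<^sub>M borel). ?F (snd p) \<le> v}"
      by auto
    also have "\<dots> \<in> sets (borel \<Otimes>\<^sub>M borel)"
      by (rule sets.Int) (rule borel_measurable_le[OF m1 borel_measurable_const], rule borel_measurable_le[OF m2 borel_measurable_const])
    finally show ?thesis .
  qed
  finally have Sm: "?S \<in> sets (borel \<Otimes>\<^sub>M borel)" .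
  have "sets (M \<Otimes>\<^sub>M M) = sets (borel \<Otimes>\<^sub>M borel)"
    by (rule sets_pair_measure_cong) auto
  hence "measurable (M \<Otimes>\<^sub>M M) (borel :: ennreal measure) = measurable (borel \<Otimes>\<^sub>M borel) borel"
    by (rule measurable_cong_sets) simp
  moreover have "(indicator ?S :: _ \<Rightarrow> ennreal) \<in> borel_measurable (borel \<Otimes>\<^sub>M borel)"
    by (rule borel_measurable_indicator[OF Sm])
  moreover have "(\<lambda>(y, z). indicator ?S (y, z) :: ennreal) = indicator ?S" by auto
  ultimately have fm: "(\<lambda>(y, z). indicator ?S (y, z) :: ennreal) \<in> borel_measurable (M \<Otimes>\<^sub>M M)"
    by simp
  have Fub: "(\<integral>\<^sup>+ z. (\<integral>\<^sup>+ y. indicator ?S (y, z) \<partial>M) \<partial>M) = (\<integral>\<^sup>+ y. (\<integral>\<^sup>+ z. indicator ?S (y, z) \<partial>M) \<partial>M)"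
    by (rule Fubini'[OF fm])
  have in1: "(\<integral>\<^sup>+ z. indicator ?S (y, z) \<partial>M) = ennreal (min (?F (g - y)) v)" for y
  proof -
    have "(\<integral>\<^sup>+ z. indicator ?S (y, z) \<partial>M) = (\<integral>\<^sup>+ z. indicator {z. z \<le> g - y \<and> ?F z \<le> v} z \<partial>M)"
      by (rule nn_integral_cong) (auto simp: indicator_def)
    also have "\<dots> = emeasure M {z. z \<le> g - y \<and> ?F z \<le> v}"
      by (rule nn_integral_indicator) measurable
    also have "\<dots> = ennreal (min (?F (g - y)) v)"
      using measure_le_min[OF rd cont v, of "g - y"] by (simp add: emeasure_eq_measure)
    finally show ?thesis .
  qed
  have in2: "(\<integral>\<^sup>+ y. indicator ?S (y, z) \<partial>M) = ennreal (indicator {y. ?F y \<le> v} z * ?F (g - z))" for z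
  proof (cases "?F z \<le> v")
    case True
    have "(\<integral>\<^sup>+ y. indicator ?S (y, z) \<partial>M) = (\<integral>\<^sup>+ y. indicator {..g - z} y \<partial>M)"
      by (rule nn_integral_cong) (use True in \<open>auto simp: indicator_def\<close>)
    also have "\<dots> = emeasure M {..g - z}" by simp
    finally show ?thesis using True by (simp add: emeasure_eq_measure cdf_def)
  next
    case False
    have "(\<integral>\<^sup>+ y. indicator ?S (y, z) \<partial>M) = (\<integral>\<^sup>+ y. 0 \<partial>M)"
      by (rule nn_integral_cong) (use False in \<open>auto simp: indicator_def\<close>)
    thus ?thesis using False by simp
  qed
  have i1: "integrable M (\<lambda>y. min (?F (g - y)) v)"
    by (rule integrable_const_bound[where B=1]) (use cdf_nonneg cdf_bounded_prob v in auto)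
  have i2: "integrable M (\<lambda>y. indicator {y. ?F y \<le> v} y * ?F (g - y))"
    by (rule integrable_const_bound[where B=1])
       (use cdf_nonneg cdf_bounded_prob in \<open>auto simp: indicator_def\<close>)
  have "ennreal (\<integral>y. indicator {y. ?F y \<le> v} y * ?F (g - y) \<partial>M)
        = (\<integral>\<^sup>+ z. ennreal (indicator {y. ?F y \<le> v} z * ?F (g - z)) \<partial>M)"
    by (rule nn_integral_eq_integral[symmetric, OF i2]) (simp add: cdf_nonneg)
  also have "\<dots> = (\<integral>\<^sup>+ y. ennreal (min (?F (g - y)) v) \<partial>M)"
    using Fub by (simp add: in1 in2)
  also have "\<dots> = ennreal (\<integral>y. min (?F (g - y)) v \<partial>M)"
    by (rule nn_integral_eq_integral[OF i1]) (simp add: cdf_nonneg v)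
  finally have "ennreal (\<integral>y. indicator {y. ?F y \<le> v} y * ?F (g - y) \<partial>M) = ennreal (\<integral>y. min (?F (g - y)) v \<partial>M)" .
  moreover have "0 \<le> (\<integral>y. indicator {y. ?F y \<le> v} y * ?F (g - y) \<partial>M)"
    by (rule integral_nonneg_AE) (simp add: cdf_nonneg)
  moreover have "0 \<le> (\<integral>y. min (?F (g - y)) v \<partial>M)"
    by (rule integral_nonneg_AE) (simp add: cdf_nonneg v)
  ultimately show ?thesis by simp
qed



lemma concave_integral:
  fixes f :: "real \<Rightarrow> real"
  assumes fi: "f integrable_on {0..1}"
    and anti: "\<And>x y. 0 < x \<Longrightarrow> x \<le> y \<Longrightarrow> y < 1 \<Longrightarrow> f y \<le> f x"
  shows "concave_on {0..1} (\<lambda>u. integral {0..u} f)"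
proof (rule concave_on_linorderI)
  show "convex {0..1::real}" by simp
  fix t x y :: real
  assume t: "0 < t" "t < 1" and x: "x \<in> {0..1}" and y: "y \<in> {0..1}" and xy: "x < y"
  define z where "z = (1 - t) *\<^sub>R x + t *\<^sub>R y"
  have z: "z = x + t * (y - x)" unfolding z_def by (simp add: algebra_simps)
  have p1: "0 < t * (y - x)" using t xy by simp
  have p2: "0 < (1 - t) * (y - x)" using t xy by simp
  have xz: "x < z" "z < y" using p1 p2 unfolding z by (auto simp: algebra_simps)
  have z01: "0 < z" "z < 1" using xz x y by auto
  define f2 where "f2 s = (if s \<in> {0, 1} then f z else f s)" for s
  have f2i: "f2 integrable_on {0..1}"
    by (rule integrable_spike_finite[of "{0,1}" _ _ f]) (auto simp: f2_def fi)
  have eqI: "integral {a..b} f = integral {a..b} f2" for a b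
    by (rule integral_spike[of "{0,1}"]) (auto simp: f2_def)
  have ge: "f z \<le> f2 s" if "s \<in> {x..z}" for s
    using that z01 x by (auto simp: f2_def intro!: anti)
  have le: "f2 s \<le> f z" if "s \<in> {z..y}" for s
    using that z01 y by (auto simp: f2_def intro!: anti)
  have sub: "f2 integrable_on {a..b}" if "0 \<le> a" "b \<le> 1" for a b
    by (rule integrable_on_subinterval[OF f2i]) (use that in auto)
  have c1: "integral {0..z} f2 = integral {0..x} f2 + integral {x..z} f2"
    by (rule Henstock_Kurzweil_Integration.integral_combine[symmetric]) (use x xz z01 sub in auto)
  have c2: "integral {0..y} f2 = integral {0..z} f2 + integral {z..y} f2"
    by (rule Henstock_Kurzweil_Integration.integral_combine[symmetric]) (use y xz z01 sub in auto)
  have I1: "(z - x) * f z \<le> integral {x..z} f2"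
    using integral_le[of "\<lambda>_. f z" "{x..z}" f2] ge sub[of x z] x z01 xz by auto
  have I2: "integral {z..y} f2 \<le> (y - z) * f z"
    using integral_le[of f2 "{z..y}" "\<lambda>_. f z"] le sub[of z y] y z01 xz by auto
  have "t * integral {z..y} f2 \<le> t * ((y - z) * f z)" using I2 t by simp
  also have "\<dots> = (1 - t) * ((z - x) * f z)" unfolding z by (simp add: algebra_simps)
  also have "\<dots> \<le> (1 - t) * integral {x..z} f2" using I1 t by simp
  finally have key: "t * integral {z..y} f2 \<le> (1 - t) * integral {x..z} f2" .
  show "(1 - t) * integral {0..x} f + t * integral {0..y} f
        \<le> integral {0..(1 - t) *\<^sub>R x + t *\<^sub>R y} f"
    unfolding z_def[symmetric] eqI c1 c2 using key by (simp add: algebra_simps)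
qed



lemma countable_negligible:
  fixes S :: "real set"
  assumes "countable S" shows "negligible S"
proof -
  have "S = \<Union> ((\<lambda>x. {x}) ` S)" by auto
  moreover have "negligible (\<Union> ((\<lambda>x. {x}) ` S))"
    by (rule negligible_countable_Union) (use assms in auto)
  ultimately show ?thesis by simp
qed

theorem mainTheorem14:
  fixes M :: "real measure" and F G :: "real \<Rightarrow> real"
    and k :: "real \<Rightarrow> real \<Rightarrow> real" and C :: "real \<Rightarrow> real \<Rightarrow> real"
  assumes "real_distribution M"
    and F_def: "F = cdf M"
    and F_cont: "continuous_on UNIV F"
    and G_def: "G = cdf (M \<star> M)"
    and k_def: "\<And>v t. k v t = F (quantile G v - quantile F t)"
    and C_def: "\<And>v u. C v u = (if v \<le> 0 then 0 else if 1 \<le> v then u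
                                   else integral {0..u} (k v))"
  shows "SI_copula C \<and> (\<forall>u\<in>{0..1}. \<forall>v\<in>{0..1}. T_op C u v = C u v)"
proof -
  have rd: "real_distribution M" by fact
  interpret real_distribution M by fact
  have rdN: "real_distribution (M \<star> M)" by (rule conv_rd[OF rd])
  have Fc: "continuous_on UNIV (cdf M)" using F_cont F_def by simp
  have Gc: "continuous_on UNIV (cdf (M \<star> M))" by (rule conv_cont[OF rd Fc])
  have Fm: "F \<in> borel_measurable borel"
    unfolding F_def by (intro borel_measurable_mono) (simp add: cdf_nondecreasing monoI)
  have F01: "0 \<le> F x" "F x \<le> 1" for x unfolding F_def using cdf_nonneg cdf_bounded_prob by auto
  have Fmono: "x \<le> y \<Longrightarrow> F x \<le> F y" for x y unfolding F_def by (rule cdf_nondecreasing)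
  have k01: "0 \<le> k v t" "k v t \<le> 1" for v t unfolding k_def using F01 by auto
  have kanti: "k v t \<le> k v s" if "0 < s" "s \<le> t" "t < 1" for v s t
    unfolding k_def F_def by (intro cdf_nondecreasing) (use qmono[OF rd that] F_def in auto)
  have kmono: "k a t \<le> k b t" if "0 < a" "a \<le> b" "b < 1" for a b t
    unfolding k_def F_def by (intro cdf_nondecreasing) (use qmono[OF rdN that] G_def in auto)
  have hm: "(\<lambda>y. F (g - y)) \<in> borel_measurable borel" for g
    by (rule measurable_compose[OF _ Fm]) simp
  have kint: "(k v has_integral v) {0..1}" if v: "0 < v" "v < 1" for v
  proof -
    let ?g = "quantile G v"
    have "((\<lambda>t. F (?g - quantile (cdf M) t)) has_integral (\<integral>y. F (?g - y) \<partial>M)) {0..1}"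
      by (rule transfer[OF rd hm, of _ 1]) (use F01 in auto)
    moreover have "(\<integral>y. F (?g - y) \<partial>M) = G ?g"
      unfolding G_def F_def by (rule conv_cdf[symmetric, OF rd])
    moreover have "G ?g = v" unfolding G_def by (rule qcdf[OF rdN Gc v])
    ultimately show ?thesis unfolding k_def F_def[symmetric] by (simp add: fun_eq_iff)
  qed
  have kints: "k v integrable_on {0..u}" if "0 < v" "v < 1" "u \<le> 1" for u v
    by (rule integrable_on_subinterval[of _ "{0..1}"]) (use kint[OF that(1,2)] that in auto)
  have Cin: "C v = (\<lambda>u. integral {0..u} (k v))" if "0 < v" "v < 1" for v
    using that by (simp add: C_def fun_eq_iff)
  have C0: "C v = (\<lambda>u. 0)" if "v \<le> 0" for v using that by (simp add: C_def fun_eq_iff)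
  have C1: "C v = (\<lambda>u. u)" if "1 \<le> v" for v using that by (simp add: C_def fun_eq_iff)
  have bnd: "\<forall>u\<in>{0..1}. C u 0 = 0 \<and> C 0 u = 0 \<and> C u 1 = u \<and> C 1 u = u"
  proof
    fix u :: real assume u: "u \<in> {0..1}"
    have "C u 1 = u"
    proof (cases "0 < u \<and> u < 1")
      case True thus ?thesis using Cin[of u] kint[of u] by (auto intro: integral_unique)
    qed (use u C_def in auto)
    thus "C u 0 = 0 \<and> C 0 u = 0 \<and> C u 1 = u \<and> C 1 u = u" by (simp add: C_def)
  qed
  have Dbnd: "0 \<le> C a v2 - C a v1 \<and> C a v2 - C a v1 \<le> v2 - v1"
    if a: "a \<in> {0..1}" and v: "0 \<le> v1" "v1 \<le> v2" "v2 \<le> 1" for a v1 v2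
  proof (cases "0 < a \<and> a < 1")
    case True
    have "C a v2 - C a v1 = integral {v1..v2} (k a)"
      using Henstock_Kurzweil_Integration.integral_combine[of 0 v1 v2 "k a"] kints[of a v2] True v
      by (simp add: Cin)
    moreover have "integral {v1..v2} (k a) \<ge> 0"
      by (rule integral_nonneg) (use k01 integrable_on_subinterval[OF kints[of a v2], of v1 v2] True v in auto)
    moreover have "integral {v1..v2} (k a) \<le> integral {v1..v2} (\<lambda>_. 1)"
      by (rule integral_le) (use k01 integrable_on_subinterval[OF kints[of a v2], of v1 v2] True v in auto)
    ultimately show ?thesis using v by simp
  next
    case False
    hence "a = 0 \<or> a = 1" using a by auto
    thus ?thesis using v by (auto simp: C_def)
  qed
  have inc: "C u2 v2 - C u2 v1 - C u1 v2 + C u1 v1 \<ge> 0"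
    if "0 \<le> u1" "u1 \<le> u2" "u2 \<le> 1" "0 \<le> v1" "v1 \<le> v2" "v2 \<le> 1" for u1 u2 v1 v2
  proof (cases "u1 = 0 \<or> u2 = 1")
    case True
    thus ?thesis using Dbnd[of u1 v1 v2] Dbnd[of u2 v1 v2] that by (auto simp: C_def)
  next
    case False
    hence u: "0 < u1" "u2 < 1" using that by auto
    have "C u2 v2 - C u2 v1 = integral {v1..v2} (k u2)"
      using Henstock_Kurzweil_Integration.integral_combine[of 0 v1 v2 "k u2"] kints[of u2 v2] u that
      by (simp add: Cin)
    moreover have "C u1 v2 - C u1 v1 = integral {v1..v2} (k u1)"
      using Henstock_Kurzweil_Integration.integral_combine[of 0 v1 v2 "k u1"] kints[of u1 v2] u that
      by (simp add: Cin)
    moreover have "integral {v1..v2} (k u1) \<le> integral {v1..v2} (k u2)"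
      by (rule integral_le)
         (use kmono[of u1 u2] integrable_on_subinterval[OF kints[of u1 v2], of v1 v2]
              integrable_on_subinterval[OF kints[of u2 v2], of v1 v2] u that in auto)
    ultimately show ?thesis by simp
  qed
  have cop: "copula C" unfolding copula_def using bnd inc by blast
  have SI: "SI_copula C" unfolding SI_copula_def
  proof (intro conjI cop ballI)
    fix v :: real assume v: "v \<in> {0..1}"
    show "concave_on {0..1} (C v)"
    proof (cases "0 < v \<and> v < 1")
      case True
      thus ?thesis unfolding Cin[OF conjunct1[OF True] conjunct2[OF True]]
        by (intro concave_integral) (use kint kanti in \<open>auto simp: has_integral_integrable\<close>)
    next
      case False
      hence "v = 0 \<or> v = 1" using v by auto
      thus ?thesis using C0[of 0] C1[of 1] by (auto simp: concave_on_const concave_on_ident)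
    qed
  qed
  have dv: "deriv (\<lambda>s. indep_copula v s) t = v" for v t
    unfolding indep_copula_def by (rule DERIV_imp_deriv) (auto intro!: derivative_eq_intros)
  have T: "T_op C u v = C u v" if u: "u \<in> {0..1}" and v: "v \<in> {0..1}" for u v
  proof -
    have Teq: "T_op C u v = integral {0..1} (\<lambda>t. min (deriv (C u) t) v)"
      unfolding T_op_def copula_join_def partial2_def dv by simp
    show ?thesis
    proof (cases "0 < u \<and> u < 1")
      case False
      hence "u = 0 \<or> u = 1" using u by auto
      thus ?thesis
      proof
        assume "u = 0"
        hence "C u = (\<lambda>s. 0)" using C0 by simp
        moreover have "deriv (\<lambda>s::real. 0::real) t = 0" for t by (rule DERIV_imp_deriv) simp
        ultimately show ?thesis using Teq v \<open>u = 0\<close> by (simp add: C_def)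
      next
        assume "u = 1"
        hence "C u = (\<lambda>s. s)" using C1 by simp
        moreover have "deriv (\<lambda>s::real. s) t = 1" for t by (rule DERIV_imp_deriv) simp
        ultimately show ?thesis using Teq v \<open>u = 1\<close> by (simp add: C_def)
      qed
    next
      case True
      hence u0: "0 < u" and u1: "u < 1" by auto
      let ?g = "quantile G u"
      define D where "D = {a\<in>{0<..<1}. \<not> continuous (at a within {0<..<1}) (\<lambda>t. - k u t)}"
      have "mono_on {0<..<1} (\<lambda>t. - k u t)"
        unfolding mono_on_def using kanti by auto
      hence Dc: "countable D" unfolding D_def by (rule mono_on_ctble_discont)
      have kI: "k u integrable_on {0..1}" using kint[OF u0 u1] by blast
      have der: "deriv (C u) t = k u t" if t: "t \<in> {0<..<1} - D" for t
      proof -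
        have "continuous (at t within {0<..<1}) (\<lambda>t. - k u t)" 
          using t unfolding D_def by (simp only: Diff_iff mem_Collect_eq) blast
        moreover have "at t within {0<..<1} = at t" using t by (intro at_within_open) auto
        ultimately have "continuous (at t) (\<lambda>t. - k u t)" by simp
        hence "continuous (at t) (\<lambda>t. - (- k u t))" by (rule continuous_minus)
        hence ct: "continuous (at t) (k u)" by simp
        have "((\<lambda>s. integral {0..s} (k u)) has_vector_derivative k u t) (at t within ({0..1} - {}))"
          by (rule integral_has_vector_derivative_continuous_at[OF kI])
             (use t ct in \<open>auto intro: continuous_at_imp_continuous_within\<close>)
        moreover have "at t within ({0..1} - {}) = at t"
          using t by (intro at_within_interior) auto
        ultimately have "((\<lambda>s. integral {0..s} (k u)) has_real_derivative k u t) (at t)"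
          by (simp add: has_real_derivative_iff_has_vector_derivative)
        thus ?thesis unfolding Cin[OF u0 u1] by (rule DERIV_imp_deriv)
      qed
      have negl: "negligible (D \<union> {0, 1})"
        using countable_negligible[OF Dc] by simp
      have "T_op C u v = integral {0..1} (\<lambda>t. min (k u t) v)"
        unfolding Teq by (rule integral_spike[OF negl]) (use der in auto)
      also have "\<dots> = (\<integral>y. min (F (?g - y)) v \<partial>M)"
      proof (rule integral_unique)
        have "((\<lambda>t. min (F (?g - quantile (cdf M) t)) v) has_integral (\<integral>y. min (F (?g - y)) v \<partial>M)) {0..1}"
          by (rule transfer[OF rd _, of _ 1]) (use F01 v hm in auto)
        thus "((\<lambda>t. min (k u t) v) has_integral (\<integral>y. min (F (?g - y)) v \<partial>M)) {0..1}"
          unfolding k_def F_def by simp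
      qed
      also have "\<dots> = (\<integral>y. indicator {y. F y \<le> v} y * F (?g - y) \<partial>M)"
        unfolding F_def by (rule sym_ident[OF rd Fc]) (use v in auto)
      also have "\<dots> = integral {0..1} (\<lambda>t. indicator {y. F y \<le> v} (quantile F t) * F (?g - quantile F t))"
      proof (rule integral_unique[symmetric])
        have m: "(\<lambda>y. indicator {y. F y \<le> v} y * F (?g - y)) \<in> borel_measurable borel"
          by (intro borel_measurable_times borel_measurable_indicator hm)
             (use Fm in \<open>simp add: borel_measurable_le\<close>)
        show "((\<lambda>t. indicator {y. F y \<le> v} (quantile F t) * F (?g - quantile F t)) has_integral
               (\<integral>y. indicator {y. F y \<le> v} y * F (?g - y) \<partial>M)) {0..1}"
          unfolding F_def by (rule transfer[OF rd m[unfolded F_def], of 1]) (use F01 F_def in \<open>auto simp: indicator_def\<close>)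
      qed
      also have "\<dots> = integral {0..1} (\<lambda>t. if t \<in> {0..v} then k u t else 0)"
      proof (rule integral_spike[of "{0,1}"])
        fix t :: real assume t: "t \<in> {0..1} - {0, 1}"
        hence "F (quantile F t) = t" unfolding F_def using qcdf[OF rd Fc, of t] by auto
        thus "(if t \<in> {0..v} then k u t else 0) = indicator {y. F y \<le> v} (quantile F t) * F (?g - quantile F t)"
          using t by (auto simp: indicator_def k_def)
      qed auto
      also have "\<dots> = integral {0..v} (k u)"
      proof -
        have "(k u has_integral integral {0..v} (k u)) {0..v}"
          using kints[OF u0 u1, of v] v by auto
        hence "((\<lambda>t. if t \<in> {0..v} then k u t else 0) has_integral integral {0..v} (k u)) {0..1}"
          using has_integral_restrict[of "{0..v}" "{0..1}" "k u"] v by auto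
        thus ?thesis by (rule integral_unique)
      qed
      also have "\<dots> = C u v" using Cin[OF u0 u1] by simp
      finally show ?thesis .
    qed
  qed
  show ?thesis using SI T by blast
qed


end
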